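(* Let $\alpha>0$ and $\lambda_1,\dots,\lambda_n,\lambda^*_1,\dots,\lambda^*_n>0$. Let $X_1,\dots,X_n$ be independent with $X_i\sim\mathrm{GE}(\alpha,\lambda_i)$ and $X^*_1,\dots,X^*_n$ independent with $X^*_i\sim\mathrm{GE}(\alpha,\lambda^*_i)$. (a) If $0<\alpha\le1$ and $\sum_{i=1}^{j}\lambda^*_{(i)}\ge\sum_{i=1}^{j}\lambda_{(i)}$ for all $j=1,\dots,n$, then $X_{1:n}\ge_{\rm st}X^*_{1:n}$. (b) If $\alpha\ge1$ and $\sum_{i=j}^{n}\lambda^*_{(i)}\le\sum_{i=j}^{n}\lambda_{(i)}$ for all $j=1,\dots,n$, then $X_{1:n}\le_{\rm st}X^*_{1:n}$.
   Context: $X\sim\mathrm{GE}(\alpha,\lambda)$ means $X$ has distribution function $(1-e^{-\lambda x})^{\alpha}$, $x>0$. $X_{1:n}=\min_i X_i$. $\lambda_{(1)}\le\dots\le\lambda_{(n)}$ are the components in increasing order. $X\le_{\rm st}Y$ means $P(X>x)\le P(Y>x)$ for all $x$. *)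

theory Defs
  imports "HOL-Probability.Probability"
begin

definition ge_cdf :: "real \<Rightarrow> real \<Rightarrow> real \<Rightarrow> real" where
  "ge_cdf \<alpha> l x = (if x > 0 then (1 - exp (- l * x)) powr \<alpha> else 0)"

definition has_GE :: "'a measure \<Rightarrow> ('a \<Rightarrow> real) \<Rightarrow> real \<Rightarrow> real \<Rightarrow> bool" where
  "has_GE M X \<alpha> l \<longleftrightarrow> X \<in> borel_measurable M \<and>
     (\<forall>x. measure M {\<omega> \<in> space M. X \<omega> \<le> x} = ge_cdf \<alpha> l x)"

definition st_le :: "'a measure \<Rightarrow> ('a \<Rightarrow> real) \<Rightarrow> 'b measure \<Rightarrow> ('b \<Rightarrow> real) \<Rightarrow> bool" where
  "st_le M X N Y \<longleftrightarrow>
     (\<forall>x. measure M {\<omega> \<in> space M. X \<omega> > x} \<le> measure N {\<omega> \<in> space N. Y \<omega> > x})"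

definition ord_stat :: "nat \<Rightarrow> (nat \<Rightarrow> real) \<Rightarrow> nat \<Rightarrow> real" where
  "ord_stat n lam i = sort (map lam [0..<n]) ! i"

definition min_rv :: "nat \<Rightarrow> (nat \<Rightarrow> 'a \<Rightarrow> real) \<Rightarrow> 'a \<Rightarrow> real" where
  "min_rv n X \<omega> = Min ((\<lambda>i. X i \<omega>) ` {..<n})"

end

theory Submission
  imports Defs "HOL-Analysis.Convex"
begin


lemma bern_conc: fixes u a :: real assumes "u > 0" "0 \<le> a" "a \<le> 1"
  shows "u powr a \<le> a * u + (1 - a)"
  using Youngs_inequality_0[of a "1-a" u 1] assms by simp

lemma bern_conv: fixes u a :: real assumes "u > 0" "a \<ge> 1"
  shows "u powr a \<ge> a * u + (1 - a)"
proof -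
  have "(u powr a) powr (1/a) * 1 powr (1 - 1/a) \<le> (1/a) * u powr a + (1 - 1/a) * 1"
    using Youngs_inequality_0[of "1/a" "1-1/a" "u powr a" 1] assms by simp
  moreover have "(u powr a) powr (1/a) = u" using assms by (simp add: powr_powr)
  ultimately have "u \<le> (1/a) * u powr a + (1 - 1/a)" by simp
  then have "a * u \<le> a * ((1/a) * u powr a + (1 - 1/a))" using assms by simp
  also have "\<dots> = u powr a + a - 1" using assms by (simp add: field_simps)
  finally show ?thesis by simp
qed

definition Q :: "real \<Rightarrow> real \<Rightarrow> real" where
  "Q a u = (1 - u powr (1 - a)) / (1 - u)"
definition dQ :: "real \<Rightarrow> real \<Rightarrow> real" where
  "dQ a u = (u powr a - a * u + a - 1) / (u powr a * (1 - u)^2)"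
lemma dm1: "(((-) (1::real)) has_real_derivative -1) (at u)"
proof -
  have "((\<lambda>x. (1::real) - x) has_real_derivative 0 - 1) (at u)"
    by (intro derivative_intros)
  then show ?thesis by simp
qed

lemma alg: fixes p u a :: real assumes "p > 0" "u < 1"
  shows "(- ((1 - a) * (1/p) * (1 - u)) - (u / p - 1)) / ((1 - u) * (1 - u)) = (p - a * u + a - 1) / (p * (1 - u)^2)"
proof -
  have "- ((1 - a) * (1/p) * (1 - u)) - (u / p - 1) = (p - a*u + a - 1)/p"
    using assms by (simp add: field_simps)
  then show ?thesis by (simp add: power2_eq_square divide_divide_eq_left mult.assoc)
qed

lemma Q_deriv: fixes u a :: real assumes "0 < u" "u < 1"
  shows "(Q a has_real_derivative dQ a u) (at u)"
proof -
  have p: "u powr a > 0" using assms by simp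
  have e1: "u powr (1 - a) = u / u powr a" using assms by (simp add: powr_diff)
  have e2: "u powr (1 - a - 1) = 1 / u powr a" using assms by (simp add: powr_minus divide_inverse)
  have e2': "u powr (- a) = 1 / u powr a" using assms by (simp add: powr_minus divide_inverse)
  show ?thesis unfolding Q_def dQ_def
    apply (rule derivative_eq_intros refl dm1)+
    using assms apply simp
    apply (rule derivative_eq_intros refl dm1)+
    using assms apply simp
    apply (simp add: e1 e2')
    using alg[of "u powr a" u a] assms p by simp
qed

lemma Q_mono1: fixes u v a :: real assumes "0 < u" "u \<le> v" "v < 1" "0 \<le> a" "a \<le> 1"
  shows "Q a v \<le> Q a u"
proof (rule DERIV_nonpos_imp_nonincreasing[OF assms(2)])
  fix x assume x: "u \<le> x" "x \<le> v"
  have "dQ a x \<le> 0" unfolding dQ_def using bern_conc[of x a] assms x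
    by (intro divide_nonpos_pos) auto
  then show "\<exists>y. DERIV (Q a) x :> y \<and> y \<le> 0" using Q_deriv[of x a] assms x by auto
qed

lemma Q_mono2: fixes u v a :: real assumes "0 < u" "u \<le> v" "v < 1" "1 \<le> a"
  shows "Q a u \<le> Q a v"
proof (rule DERIV_nonneg_imp_nondecreasing[OF assms(2)])
  fix x assume x: "u \<le> x" "x \<le> v"
  have "dQ a x \<ge> 0" unfolding dQ_def using bern_conv[of x a] assms x
    by (intro divide_nonneg_pos) auto
  then show "\<exists>y. DERIV (Q a) x :> y \<and> y \<ge> 0" using Q_deriv[of x a] assms x by auto
qed


definition phi :: "real \<Rightarrow> real \<Rightarrow> real" where
  "phi a t = ln (1 - (1 - exp (-t)) powr a)"
definition dphi :: "real \<Rightarrow> real \<Rightarrow> real" where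
  "dphi a t = - (a * (1 - exp (-t)) powr (a - 1) * exp (-t)) / (1 - (1 - exp (-t)) powr a)"

lemma powr_lt1: fixes u a :: real assumes "0 \<le> u" "u < 1" "a > 0" shows "u powr a < 1"
  using powr_less_mono2[OF assms(3,1,2)] by simp

lemma u_bounds: "(t::real) > 0 \<Longrightarrow> 0 < 1 - exp (-t) \<and> 1 - exp (-t) < (1::real)"
  by auto

lemma upow_bounds: fixes t a :: real assumes "t > 0" "a > 0"
  shows "0 < (1 - exp (-t)) powr a" "(1 - exp (-t)) powr a < 1"
  using u_bounds[OF assms(1)] assms(2) by (auto intro: powr_lt1)

lemma phi_deriv: fixes t a :: real assumes "t > 0" "a > 0" shows "(phi a has_real_derivative dphi a t) (at t)"
proof -
  note b = u_bounds[OF assms(1)] upow_bounds[OF assms]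
  show ?thesis unfolding phi_def dphi_def
    by (rule derivative_eq_intros refl | use b in simp)+
qed

lemma oneQ_pos: fixes u a :: real assumes "0 < u" "u < 1" "a > 0"
  shows "1 - Q a u > 0" "1 - Q a u = (u / u powr a - u) / (1 - u)"
proof -
  have p: "0 < u powr a" "u powr a < 1" using assms by (auto intro: powr_lt1)
  have e1: "u powr (1 - a) = u / u powr a" using assms by (simp add: powr_diff)
  show eq: "1 - Q a u = (u / u powr a - u) / (1 - u)"
    unfolding Q_def e1 using assms by (simp add: field_simps)
  have "u / u powr a > u" using p assms by (simp add: less_divide_eq)
  then show "1 - Q a u > 0" unfolding eq using assms by simp
qed

lemma dphi_Q: fixes t a :: real assumes "t > 0" "a > 0"
  shows "dphi a t = - a / (1 - Q a (1 - exp (-t)))"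
proof -
  define u where "u = 1 - exp (-t)"
  have u: "0 < u" "u < 1" using u_bounds[OF assms(1)] by (auto simp: u_def)
  have p: "0 < u powr a" "u powr a < 1" using u assms by (auto intro: powr_lt1)
  have ex: "exp (-t) = 1 - u" by (simp add: u_def)
  have e3: "u powr (a - 1) = u powr a / u" using u by (simp add: powr_diff)
  have "dphi a t = - (a * (u powr a / u) * (1 - u)) / (1 - u powr a)"
    unfolding dphi_def u_def[symmetric] ex by (simp add: e3)
  also have "\<dots> = - a / ((u / u powr a - u) / (1 - u))"
  proof -
    have nz: "u \<noteq> 0" "1 - u \<noteq> 0" "1 - u powr a \<noteq> 0" "u powr a \<noteq> 0" using u p by auto
    have h: "u / u powr a - u = u * (1 - u powr a) / u powr a" using nz by (simp add: field_simps)
    show ?thesis unfolding h using nz by (simp add: field_simps)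
  qed
  finally show ?thesis using oneQ_pos(2)[OF u assms(2)] by (simp add: u_def)
qed

lemma dphi_nonpos: fixes t a :: real assumes "t > 0" "a > 0" shows "dphi a t \<le> 0"
  using dphi_Q[OF assms] oneQ_pos(1)[of "1 - exp (-t)" a] u_bounds[OF assms(1)] assms
  by (simp add: divide_nonpos_pos)

lemma dphi_mono1: fixes s t a :: real assumes "0 < s" "s \<le> t" "0 < a" "a \<le> 1"
  shows "dphi a s \<le> dphi a t"
proof -
  have t: "t > 0" using assms by simp
  define us ut where "us = 1 - exp (-s)" and "ut = 1 - exp (-t)"
  have u: "0 < us" "us \<le> ut" "ut < 1" using u_bounds[OF assms(1)] u_bounds[OF t] assms(2)
    by (auto simp: us_def ut_def)
  have q: "Q a ut \<le> Q a us" using Q_mono1[OF u] assms by simp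
  have ps: "1 - Q a us > 0" "1 - Q a ut > 0" using oneQ_pos(1) u assms by auto
  have "a / (1 - Q a ut) \<le> a / (1 - Q a us)"
    using q ps assms by (intro divide_left_mono) auto
  then show ?thesis using dphi_Q[OF assms(1,3)] dphi_Q[OF t assms(3)] by (simp add: us_def ut_def)
qed

lemma dphi_mono2: fixes s t a :: real assumes "0 < s" "s \<le> t" "1 \<le> a"
  shows "dphi a t \<le> dphi a s"
proof -
  have t: "t > 0" and a: "a > 0" using assms by simp_all
  define us ut where "us = 1 - exp (-s)" and "ut = 1 - exp (-t)"
  have u: "0 < us" "us \<le> ut" "ut < 1" using u_bounds[OF assms(1)] u_bounds[OF t] assms(2)
    by (auto simp: us_def ut_def)
  have q: "Q a us \<le> Q a ut" using Q_mono2[OF u] assms by simp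
  have ps: "1 - Q a us > 0" "1 - Q a ut > 0" using oneQ_pos(1) u a by auto
  have "a / (1 - Q a us) \<le> a / (1 - Q a ut)"
    using q ps a by (intro divide_left_mono) auto
  then show ?thesis using dphi_Q[OF assms(1) a] dphi_Q[OF t a] by (simp add: us_def ut_def)
qed

lemma tangent: fixes f f' :: "real \<Rightarrow> real"
  assumes der: "\<And>x. x > 0 \<Longrightarrow> (f has_real_derivative f' x) (at x)"
    and mono: "\<And>x y. 0 < x \<Longrightarrow> x \<le> y \<Longrightarrow> f' x \<le> f' y"
    and xy: "x > 0" "y > 0"
  shows "f x - f y \<le> f' x * (x - y)"
proof (cases x y rule: linorder_cases)
  case less
  then obtain z where z: "x < z" "z < y" "f y - f x = (y - x) * f' z"
    using MVT2[OF less, of f f'] der xy by force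
  have "f' x \<le> f' z" using mono xy z by simp
  then have "(y - x) * f' x \<le> (y - x) * f' z" using less by (intro mult_left_mono) auto
  then show ?thesis using z by (simp add: algebra_simps)
next
  case equal then show ?thesis by simp
next
  case greater
  then obtain z where z: "y < z" "z < x" "f x - f y = (x - y) * f' z"
    using MVT2[OF greater, of f f'] der xy by force
  have "f' z \<le> f' x" using mono xy z by simp
  then have "(x - y) * f' z \<le> (x - y) * f' x" using greater by (intro mult_left_mono) auto
  then show ?thesis using z by (simp add: algebra_simps)
qed


lemma abel1:
  fixes c D :: "nat \<Rightarrow> real"
  assumes mono: "\<And>i j. i \<le> j \<Longrightarrow> j < n \<Longrightarrow> c i \<le> c j"
    and P: "\<And>j. 1 \<le> j \<Longrightarrow> j \<le> n \<Longrightarrow> 0 \<le> (\<Sum>i<j. D i)"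
  shows "1 \<le> k \<Longrightarrow> k \<le> n \<Longrightarrow> (\<Sum>i<k. c i * D i) \<le> c (k-1) * (\<Sum>i<k. D i)"
proof (induction k rule: nat_induct_at_least)
  case base
  then show ?case by simp
next
  case (Suc k)
  have ih: "(\<Sum>i<k. c i * D i) \<le> c (k-1) * (\<Sum>i<k. D i)" using Suc by simp
  have "c (k-1) \<le> c k" using mono Suc by simp
  moreover have "0 \<le> (\<Sum>i<k. D i)" using P Suc by simp
  ultimately have "c (k-1) * (\<Sum>i<k. D i) \<le> c k * (\<Sum>i<k. D i)" by (rule mult_right_mono)
  then show ?case using ih by (simp add: algebra_simps)
qed

lemma abel2:
  fixes c D :: "nat \<Rightarrow> real"
  assumes mono: "\<And>i j. i \<le> j \<Longrightarrow> j < n \<Longrightarrow> c i \<le> c j"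
    and S: "\<And>j. j < n \<Longrightarrow> (\<Sum>i\<in>{j..<n}. D i) \<le> 0"
    and j: "j < n"
  shows "(\<Sum>i\<in>{j..<n}. c i * D i) \<le> c j * (\<Sum>i\<in>{j..<n}. D i)"
proof -
  have "j \<le> n - 1" using j by simp
  then show ?thesis
  proof (induction j rule: inc_induct)
    case base
    have "{n-1..<n} = {n-1}" using j by auto
    then show ?case by simp
  next
    case (step m)
    have m: "m < n" using step by simp
    have ih: "(\<Sum>i\<in>{Suc m..<n}. c i * D i) \<le> c (Suc m) * (\<Sum>i\<in>{Suc m..<n}. D i)"
      using step by simp
    have "c m \<le> c (Suc m)" using mono step by simp
    moreover have "(\<Sum>i\<in>{Suc m..<n}. D i) \<le> 0" using S step by simp
    ultimately have "c (Suc m) * (\<Sum>i\<in>{Suc m..<n}. D i) \<le> c m * (\<Sum>i\<in>{Suc m..<n}. D i)"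
      by (simp add: mult_right_mono_neg)
    then show ?case using ih m by (simp add: sum.atLeast_Suc_lessThan algebra_simps)
  qed
qed

lemma maj1:
  fixes f f' :: "real \<Rightarrow> real" and a b :: "nat \<Rightarrow> real"
  assumes apos: "\<And>i. i < n \<Longrightarrow> a i > 0" and bpos: "\<And>i. i < n \<Longrightarrow> b i > 0"
    and tang: "\<And>x y. x > 0 \<Longrightarrow> y > 0 \<Longrightarrow> f x - f y \<le> f' x * (x - y)"
    and mono: "\<And>i j. i \<le> j \<Longrightarrow> j < n \<Longrightarrow> f' (a i) \<le> f' (a j)"
    and nonpos: "\<And>x. x > 0 \<Longrightarrow> f' x \<le> 0"
    and pre: "\<And>j. 1 \<le> j \<Longrightarrow> j \<le> n \<Longrightarrow> (\<Sum>i<j. b i) \<le> (\<Sum>i<j. a i)"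
  shows "(\<Sum>i<n. f (a i)) \<le> (\<Sum>i<n. f (b i))"
proof (cases "n = 0")
  case True then show ?thesis by simp
next
  case False
  have "(\<Sum>i<n. f (a i)) - (\<Sum>i<n. f (b i)) = (\<Sum>i<n. f (a i) - f (b i))"
    by (simp add: sum_subtractf)
  also have "\<dots> \<le> (\<Sum>i<n. f' (a i) * (a i - b i))"
    by (intro sum_mono tang apos bpos) auto
  also have "\<dots> \<le> f' (a (n-1)) * (\<Sum>i<n. (a i - b i))"
  proof (rule abel1[where c="\<lambda>i. f' (a i)" and D="\<lambda>i. a i - b i" and n=n])
    show "\<And>i j. i \<le> j \<Longrightarrow> j < n \<Longrightarrow> f' (a i) \<le> f' (a j)" by (rule mono)
    show "\<And>j. 1 \<le> j \<Longrightarrow> j \<le> n \<Longrightarrow> 0 \<le> (\<Sum>i<j. a i - b i)"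
      using pre by (simp add: sum_subtractf)
  qed (use False in auto)
  also have "\<dots> \<le> 0"
  proof (rule mult_nonpos_nonneg)
    show "f' (a (n-1)) \<le> 0" using nonpos apos False by simp
    show "0 \<le> (\<Sum>i<n. a i - b i)" using pre[of n] False by (simp add: sum_subtractf)
  qed
  finally show ?thesis by simp
qed

lemma maj2:
  fixes f f' :: "real \<Rightarrow> real" and a b :: "nat \<Rightarrow> real"
  assumes apos: "\<And>i. i < n \<Longrightarrow> a i > 0" and bpos: "\<And>i. i < n \<Longrightarrow> b i > 0"
    and tang: "\<And>x y. x > 0 \<Longrightarrow> y > 0 \<Longrightarrow> f x - f y \<le> f' x * (x - y)"
    and mono: "\<And>i j. i \<le> j \<Longrightarrow> j < n \<Longrightarrow> f' (a i) \<le> f' (a j)"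
    and nonneg: "\<And>x. x > 0 \<Longrightarrow> f' x \<ge> 0"
    and suf: "\<And>j. j < n \<Longrightarrow> (\<Sum>i\<in>{j..<n}. a i) \<le> (\<Sum>i\<in>{j..<n}. b i)"
  shows "(\<Sum>i<n. f (a i)) \<le> (\<Sum>i<n. f (b i))"
proof (cases "n = 0")
  case True then show ?thesis by simp
next
  case False
  have "(\<Sum>i<n. f (a i)) - (\<Sum>i<n. f (b i)) = (\<Sum>i<n. f (a i) - f (b i))"
    by (simp add: sum_subtractf)
  also have "\<dots> \<le> (\<Sum>i<n. f' (a i) * (a i - b i))"
    by (intro sum_mono tang apos bpos) auto
  also have "\<dots> = (\<Sum>i\<in>{0..<n}. f' (a i) * (a i - b i))"
    by (simp add: atLeast0LessThan)
  also have "\<dots> \<le> f' (a 0) * (\<Sum>i\<in>{0..<n}. (a i - b i))"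
  proof (rule abel2[where c="\<lambda>i. f' (a i)" and D="\<lambda>i. a i - b i" and n=n])
    show "\<And>i j. i \<le> j \<Longrightarrow> j < n \<Longrightarrow> f' (a i) \<le> f' (a j)" by (rule mono)
    show "\<And>j. j < n \<Longrightarrow> (\<Sum>i\<in>{j..<n}. a i - b i) \<le> 0"
      using suf by (simp add: sum_subtractf)
  qed (use False in auto)
  also have "\<dots> \<le> 0"
  proof (rule mult_nonneg_nonpos)
    show "f' (a 0) \<ge> 0" using nonneg apos False by simp
    show "(\<Sum>i\<in>{0..<n}. a i - b i) \<le> 0" using suf[of 0] False by (simp add: sum_subtractf)
  qed
  finally show ?thesis by simp
qed


lemma ord_stat_sum: "(\<Sum>i<n. g (ord_stat n l i)) = (\<Sum>i<n. (g (l i) :: real))"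
proof -
  define xs where "xs = map l [0..<n]"
  have len: "length (sort xs) = n" "length xs = n" by (simp_all add: xs_def)
  have "(\<Sum>i<n. g (ord_stat n l i)) = (\<Sum>i=0..<length (map g (sort xs)). map g (sort xs) ! i)"
    by (simp add: ord_stat_def xs_def[symmetric] len atLeast0LessThan)
  also have "\<dots> = sum_list (map g (sort xs))" by (simp add: sum_list_sum_nth)
  also have "\<dots> = sum_mset (mset (map g (sort xs)))" by (rule sum_mset_sum_list[symmetric])
  also have "\<dots> = sum_mset (mset (map g xs))" by simp
  also have "\<dots> = sum_list (map g xs)" by (rule sum_mset_sum_list)
  also have "\<dots> = (\<Sum>i<n. g (l i))"
    by (simp add: xs_def sum_list_sum_nth atLeast0LessThan)
  finally show ?thesis .
qed

lemma ord_stat_sorted: "i \<le> j \<Longrightarrow> j < n \<Longrightarrow> ord_stat n l i \<le> ord_stat n l j"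
  unfolding ord_stat_def by (rule sorted_nth_mono) auto

lemma ord_stat_pos: assumes "\<forall>i<n. l i > 0" "i < n" shows "ord_stat n l i > 0"
proof -
  have "ord_stat n l i \<in> set (sort (map l [0..<n]))" unfolding ord_stat_def
    using assms(2) by (intro nth_mem) simp
  then show ?thesis using assms(1) by auto
qed

lemma surv:
  assumes "prob_space M" "n \<ge> 1" "prob_space.indep_vars M (\<lambda>_. borel) X {..<n}"
    and "\<forall>i<n. has_GE M (X i) \<alpha> (l i)"
  shows "measure M {\<omega>\<in>space M. min_rv n X \<omega> > x} = (\<Prod>i<n. 1 - ge_cdf \<alpha> (l i) x)"
proof -
  interpret prob_space M by fact
  have z: "0 \<in> {..<n}" using assms(2) by simp
  have ne: "(\<lambda>i. X i \<omega>) ` {..<n} \<noteq> {}" for \<omega> using z by blast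
  have set: "{\<omega>\<in>space M. min_rv n X \<omega> > x} = (\<Inter>i\<in>{..<n}. X i -` {x<..} \<inter> space M)"
    using assms(2) ne by (auto simp: min_rv_def)
  have "prob (\<Inter>i\<in>{..<n}. X i -` {x<..} \<inter> space M) = (\<Prod>i<n. prob (X i -` {x<..} \<inter> space M))"
    by (rule indep_varsD[OF assms(3)]) (use z in auto)
  also have "\<dots> = (\<Prod>i<n. 1 - ge_cdf \<alpha> (l i) x)"
  proof (rule prod.cong[OF refl])
    fix i assume i: "i \<in> {..<n}"
    have g: "X i \<in> borel_measurable M" "measure M {\<omega> \<in> space M. X i \<omega> \<le> x} = ge_cdf \<alpha> (l i) x"
      using assms(4) i by (auto simp: has_GE_def)
    have ev: "{\<omega> \<in> space M. X i \<omega> \<le> x} \<in> events" using g(1) by measurable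
    have "X i -` {x<..} \<inter> space M = space M - {\<omega> \<in> space M. X i \<omega> \<le> x}" by auto
    then show "prob (X i -` {x<..} \<inter> space M) = 1 - ge_cdf \<alpha> (l i) x"
      using prob_compl[OF ev] g(2) by simp
  qed
  finally show ?thesis using set by simp
qed

lemma surv_exp: fixes x l a :: real assumes "x > 0" "l > 0" "a > 0"
  shows "1 - ge_cdf a l x = exp (phi a (x * l))"
proof -
  have t: "x * l > 0" using assms by simp
  have "(1 - exp (- (x * l))) powr a < 1" using upow_bounds(2)[OF t assms(3)] .
  then show ?thesis using assms by (simp add: ge_cdf_def phi_def mult.commute)
qed

lemma ge_cdf_nonpos: "x \<le> 0 \<Longrightarrow> ge_cdf a l x = 0"
  by (simp add: ge_cdf_def)



theorem mainTheorem12: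
  fixes M :: "'a measure" and N :: "'b measure"
    and X :: "nat \<Rightarrow> 'a \<Rightarrow> real" and Xs :: "nat \<Rightarrow> 'b \<Rightarrow> real"
    and lam lams :: "nat \<Rightarrow> real" and \<alpha> :: real and n :: nat
  assumes "prob_space M" and "prob_space N"
    and "n \<ge> 1" and "\<alpha> > 0"
    and "\<forall>i<n. lam i > 0" and "\<forall>i<n. lams i > 0"
    and "prob_space.indep_vars M (\<lambda>_. borel) X {..<n}"
    and "prob_space.indep_vars N (\<lambda>_. borel) Xs {..<n}"
    and "\<forall>i<n. has_GE M (X i) \<alpha> (lam i)"
    and "\<forall>i<n. has_GE N (Xs i) \<alpha> (lams i)"
  shows "(\<alpha> \<le> 1 \<and> (\<forall>j\<in>{1..n}. (\<Sum>i<j. ord_stat n lams i) \<ge> (\<Sum>i<j. ord_stat n lam i))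
            \<longrightarrow> st_le N (min_rv n Xs) M (min_rv n X))
       \<and> (\<alpha> \<ge> 1 \<and> (\<forall>j<n. (\<Sum>i\<in>{j..<n}. ord_stat n lams i) \<le> (\<Sum>i\<in>{j..<n}. ord_stat n lam i))
            \<longrightarrow> st_le M (min_rv n X) N (min_rv n Xs))"
proof -
  note sM = surv[OF assms(1,3,7,9)]
  note sN = surv[OF assms(2,3,8,10)]
  have a: "\<alpha> > 0" by fact
  have red: "(\<Prod>i<n. 1 - ge_cdf \<alpha> (l1 i) x) \<le> (\<Prod>i<n. 1 - ge_cdf \<alpha> (l2 i) x)"
    if pos1: "\<forall>i<n. l1 i > 0" and pos2: "\<forall>i<n. l2 i > 0"
      and le: "x > 0 \<Longrightarrow> (\<Sum>i<n. phi \<alpha> (x * ord_stat n l1 i)) \<le> (\<Sum>i<n. phi \<alpha> (x * ord_stat n l2 i))"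
    for l1 l2 :: "nat \<Rightarrow> real" and x :: real
  proof (cases "x > 0")
    case False
    then show ?thesis by (simp add: ge_cdf_nonpos)
  next
    case True
    have "(\<Prod>i<n. 1 - ge_cdf \<alpha> (l1 i) x) = (\<Prod>i<n. exp (phi \<alpha> (x * l1 i)))"
      using pos1 True a by (intro prod.cong refl surv_exp) auto
    also have "\<dots> = exp (\<Sum>i<n. phi \<alpha> (x * l1 i))" by (simp add: exp_sum)
    also have "\<dots> \<le> exp (\<Sum>i<n. phi \<alpha> (x * l2 i))"
      using le[OF True] ord_stat_sum[of "\<lambda>v. phi \<alpha> (x * v)" n l1] ord_stat_sum[of "\<lambda>v. phi \<alpha> (x * v)" n l2]
      by simp
    also have "\<dots> = (\<Prod>i<n. exp (phi \<alpha> (x * l2 i)))" by (simp add: exp_sum)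
    also have "\<dots> = (\<Prod>i<n. 1 - ge_cdf \<alpha> (l2 i) x)"
      using pos2 True a by (intro prod.cong refl surv_exp[symmetric]) auto
    finally show ?thesis .
  qed
  have der: "\<And>t. t > 0 \<Longrightarrow> (phi \<alpha> has_real_derivative dphi \<alpha> t) (at t)"
    using phi_deriv a by blast
  have posL: "\<And>x i. x > 0 \<Longrightarrow> i < n \<Longrightarrow> x * ord_stat n lam i > 0"
    using ord_stat_pos assms(5) by simp
  have posLs: "\<And>x i. x > 0 \<Longrightarrow> i < n \<Longrightarrow> x * ord_stat n lams i > 0"
    using ord_stat_pos assms(6) by simp
  have sortLs: "\<And>x i j. x > 0 \<Longrightarrow> i \<le> j \<Longrightarrow> j < n \<Longrightarrow> x * ord_stat n lams i \<le> x * ord_stat n lams j"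
    using ord_stat_sorted by (simp add: mult_left_mono)
  show ?thesis
  proof (intro conjI impI)
    assume h: "\<alpha> \<le> 1 \<and> (\<forall>j\<in>{1..n}. (\<Sum>i<j. ord_stat n lams i) \<ge> (\<Sum>i<j. ord_stat n lam i))"
    have tang: "phi \<alpha> u - phi \<alpha> v \<le> dphi \<alpha> u * (u - v)" if "u > 0" "v > 0" for u v
      by (rule tangent[OF der]) (use dphi_mono1 a h that in auto)
    show "st_le N (min_rv n Xs) M (min_rv n X)"
      unfolding st_le_def
    proof
      fix x
      show "measure N {\<omega> \<in> space N. x < min_rv n Xs \<omega>} \<le> measure M {\<omega> \<in> space M. x < min_rv n X \<omega>}"
        unfolding sM sN
      proof (rule red[OF assms(6,5)])
        assume x: "x > 0"
        show "(\<Sum>i<n. phi \<alpha> (x * ord_stat n lams i)) \<le> (\<Sum>i<n. phi \<alpha> (x * ord_stat n lam i))"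
        proof (rule maj1[where f'="dphi \<alpha>" and f="phi \<alpha>" and a="\<lambda>i. x * ord_stat n lams i" and b="\<lambda>i. x * ord_stat n lam i"])
          show "\<And>i. i < n \<Longrightarrow> x * ord_stat n lams i > 0" using posLs x by simp
          show "\<And>i. i < n \<Longrightarrow> x * ord_stat n lam i > 0" using posL x by simp
          show "\<And>u v. u > 0 \<Longrightarrow> v > 0 \<Longrightarrow> phi \<alpha> u - phi \<alpha> v \<le> dphi \<alpha> u * (u - v)" by (rule tang)
          show "\<And>i j. i \<le> j \<Longrightarrow> j < n \<Longrightarrow> dphi \<alpha> (x * ord_stat n lams i) \<le> dphi \<alpha> (x * ord_stat n lams j)"
            using dphi_mono1 sortLs posLs x a h by simp
          show "\<And>u. u > 0 \<Longrightarrow> dphi \<alpha> u \<le> 0" using dphi_nonpos a by simp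
          fix j assume j: "1 \<le> j" "j \<le> n"
          have "(\<Sum>i<j. ord_stat n lam i) \<le> (\<Sum>i<j. ord_stat n lams i)" using h j by auto
          then have "x * (\<Sum>i<j. ord_stat n lam i) \<le> x * (\<Sum>i<j. ord_stat n lams i)"
            using x by (simp add: mult_left_mono)
          then show "(\<Sum>i<j. x * ord_stat n lam i) \<le> (\<Sum>i<j. x * ord_stat n lams i)"
            by (simp add: sum_distrib_left)
        qed
      qed
    qed
  next
    assume h: "\<alpha> \<ge> 1 \<and> (\<forall>j<n. (\<Sum>i\<in>{j..<n}. ord_stat n lams i) \<le> (\<Sum>i\<in>{j..<n}. ord_stat n lam i))"
    have der': "\<And>t. t > 0 \<Longrightarrow> ((\<lambda>t. - phi \<alpha> t) has_real_derivative - dphi \<alpha> t) (at t)"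
      using der by (auto intro: DERIV_minus)
    have tang: "- phi \<alpha> u - - phi \<alpha> v \<le> - dphi \<alpha> u * (u - v)" if "u > 0" "v > 0" for u v
      by (rule tangent[OF der', of u v]) (use dphi_mono2 a h that in auto)
    show "st_le M (min_rv n X) N (min_rv n Xs)"
      unfolding st_le_def
    proof
      fix x
      show "measure M {\<omega> \<in> space M. x < min_rv n X \<omega>} \<le> measure N {\<omega> \<in> space N. x < min_rv n Xs \<omega>}"
        unfolding sM sN
      proof (rule red[OF assms(5,6)])
        assume x: "x > 0"
        have "(\<Sum>i<n. - phi \<alpha> (x * ord_stat n lams i)) \<le> (\<Sum>i<n. - phi \<alpha> (x * ord_stat n lam i))"
        proof (rule maj2[where f'="\<lambda>t. - dphi \<alpha> t" and f="\<lambda>t. - phi \<alpha> t" and a="\<lambda>i. x * ord_stat n lams i" and b="\<lambda>i. x * ord_stat n lam i"])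
          show "\<And>i. i < n \<Longrightarrow> x * ord_stat n lams i > 0" using posLs x by simp
          show "\<And>i. i < n \<Longrightarrow> x * ord_stat n lam i > 0" using posL x by simp
          show "\<And>u v. u > 0 \<Longrightarrow> v > 0 \<Longrightarrow> - phi \<alpha> u - - phi \<alpha> v \<le> - dphi \<alpha> u * (u - v)" by (rule tang)
          show "\<And>i j. i \<le> j \<Longrightarrow> j < n \<Longrightarrow> - dphi \<alpha> (x * ord_stat n lams i) \<le> - dphi \<alpha> (x * ord_stat n lams j)"
            using dphi_mono2 sortLs posLs x h by simp
          show "\<And>u. u > 0 \<Longrightarrow> - dphi \<alpha> u \<ge> 0" using dphi_nonpos a by simp
          fix j assume j: "j < n"
          have "(\<Sum>i\<in>{j..<n}. ord_stat n lams i) \<le> (\<Sum>i\<in>{j..<n}. ord_stat n lam i)" using h j by auto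
          then have "x * (\<Sum>i\<in>{j..<n}. ord_stat n lams i) \<le> x * (\<Sum>i\<in>{j..<n}. ord_stat n lam i)"
            using x by (simp add: mult_left_mono)
          then show "(\<Sum>i\<in>{j..<n}. x * ord_stat n lams i) \<le> (\<Sum>i\<in>{j..<n}. x * ord_stat n lam i)"
            by (simp add: sum_distrib_left)
        qed
        then show "(\<Sum>i<n. phi \<alpha> (x * ord_stat n lam i)) \<le> (\<Sum>i<n. phi \<alpha> (x * ord_stat n lams i))"
          by (simp add: sum_negf)
      qed
    qed
  qed
qed
end
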